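(* Let $\Theta$ be a typed signature. For every $\chi\in\mathcal L_{\mathrm{CL}}(P_\Theta)$: $\chi$ is true at every state of every coherent propositional coalition model over $P_\Theta$ iff $\vdash_{\mathrm{CL}_{\mathrm{Coh},\Theta}}\chi$.
   Context: A typed signature is $\Theta=(\mathrm{Ag},X,\{D_x\}_{x\in X})$ with $\mathrm{Ag}$ a finite non-empty set of agents, $X$ a finite set of variables, each $D_x$ finite non-empty. $P_\Theta=\{p_x^c\mid x\in X,c\in D_x\}$ distinct atoms; $\mathcal L_{\mathrm{CL}}(P_\Theta)$: $\chi::=\top\mid p\mid\neg\chi\mid\chi\wedge\chi'\mid[C]\chi$ ($p\in P_\Theta,C\subseteq\mathrm{Ag}$). A propositional coalition model (explicit one-step game form model) is $(S,\{\Sigma_i\}_{i\in\mathrm{Ag}},o,V)$ with $S\neq\varnothing$, each $\Sigma_i\neq\varnothing$, $o:S\times\Sigma_{\mathrm{Ag}}\to S$ where $\Sigma_C=\prod_{i\in C}\Sigma_i$, and $V:P_\Theta\to\mathcal P(S)$; $p$ true at $s$ iff $s\in V(p)$; $[C]\chi$ true at $s$ iff $\exists\alpha_C\in\Sigma_C\,\forall\beta_{\mathrm{Ag}\setminus C}$: $\chi$ true at $o(s,\alpha_C\sqcup\beta)$. It is coherent if every state satisfies $\bigwedge_{x\in X}\bigl((\bigvee_{c\in D_x}p_x^c)\wedge\bigwedge_{c\neq d}(p_x^c\to\neg p_x^d)\bigr)$. $\mathrm{CL}_{\mathrm{Coh},\Theta}$ is the Hilbert system with: all instances of propositional tautologies;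 (C1) $[C](\varphi\wedge\psi)\to[C]\varphi$; (C2) $\neg[C]\bot$; (C3) $[C]\top$; (C4) $[C]\varphi\wedge[D]\psi\to[C\cup D](\varphi\wedge\psi)$ for disjoint $C,D$; (C5) $\neg[\varnothing]\neg\varphi\to[\mathrm{Ag}]\varphi$; $\bigvee_{c\in D_x}p_x^c$ for each $x$; $p_x^c\to\neg p_x^d$ for distinct $c,d\in D_x$; rules MP and RE (from $\vdash\varphi\leftrightarrow\psi$ infer $\vdash[C]\varphi\leftrightarrow[C]\psi$). *)

theory Defs
  imports Main "HOL-Library.Infinite_Typeclass"
begin

text \<open>Typed signature: agents are the (finite, non-empty) type 'ag; X is a finite set of
variables; D x is the finite non-empty domain of variable x.\<close>

definition typed_sig :: "'x set \<Rightarrow> ('x \<Rightarrow> 'c set) \<Rightarrow> bool" where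
  "typed_sig X D \<longleftrightarrow> finite X \<and> (\<forall>x\<in>X. finite (D x) \<and> D x \<noteq> {})"

text \<open>Formulas of coalition logic; atom Atom x c stands for p_x^c.\<close>

datatype ('ag, 'x, 'c) fm =
    Top
  | Atom 'x 'c
  | Neg "('ag, 'x, 'c) fm"
  | And "('ag, 'x, 'c) fm" "('ag, 'x, 'c) fm"
  | Box "'ag set" "('ag, 'x, 'c) fm"

definition Bot :: "('ag, 'x, 'c) fm" where "Bot = Neg Top"
definition Or :: "('ag, 'x, 'c) fm \<Rightarrow> ('ag, 'x, 'c) fm \<Rightarrow> ('ag, 'x, 'c) fm" where
  "Or a b = Neg (And (Neg a) (Neg b))"
definition Imp :: "('ag, 'x, 'c) fm \<Rightarrow> ('ag, 'x, 'c) fm \<Rightarrow> ('ag, 'x, 'c) fm" where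
  "Imp a b = Neg (And a (Neg b))"
definition Iff :: "('ag, 'x, 'c) fm \<Rightarrow> ('ag, 'x, 'c) fm \<Rightarrow> ('ag, 'x, 'c) fm" where
  "Iff a b = And (Imp a b) (Imp b a)"

fun Disj :: "('ag, 'x, 'c) fm list \<Rightarrow> ('ag, 'x, 'c) fm" where
  "Disj [] = Bot"
| "Disj (a # as) = Or a (Disj as)"

text \<open>Formulas of L_CL(P_Theta): all atoms belong to P_Theta.\<close>

fun wf :: "'x set \<Rightarrow> ('x \<Rightarrow> 'c set) \<Rightarrow> ('ag, 'x, 'c) fm \<Rightarrow> bool" where
  "wf X D Top = True"
| "wf X D (Atom x c) = (x \<in> X \<and> c \<in> D x)"
| "wf X D (Neg a) = wf X D a"
| "wf X D (And a b) = (wf X D a \<and> wf X D b)"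
| "wf X D (Box C a) = wf X D a"

text \<open>Instances of propositional tautologies: true under every Boolean assignment to the
maximal non-Boolean subformulas (atoms and coalition formulas).\<close>

fun peval :: "(('ag, 'x, 'c) fm \<Rightarrow> bool) \<Rightarrow> ('ag, 'x, 'c) fm \<Rightarrow> bool" where
  "peval v Top = True"
| "peval v (Atom x c) = v (Atom x c)"
| "peval v (Neg a) = (\<not> peval v a)"
| "peval v (And a b) = (peval v a \<and> peval v b)"
| "peval v (Box C a) = v (Box C a)"

definition taut :: "('ag, 'x, 'c) fm \<Rightarrow> bool" where
  "taut a \<longleftrightarrow> (\<forall>v. peval v a)"

inductive derivable :: "'x set \<Rightarrow> ('x \<Rightarrow> 'c set) \<Rightarrow> ('ag::finite, 'x, 'c) fm \<Rightarrow> bool"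
  for X D where
  Taut: "wf X D a \<Longrightarrow> taut a \<Longrightarrow> derivable X D a"
| C1: "wf X D a \<Longrightarrow> wf X D b \<Longrightarrow> derivable X D (Imp (Box C (And a b)) (Box C a))"
| C2: "derivable X D (Neg (Box C Bot))"
| C3: "derivable X D (Box C Top)"
| C4: "wf X D a \<Longrightarrow> wf X D b \<Longrightarrow> C \<inter> C' = {} \<Longrightarrow>
        derivable X D (Imp (And (Box C a) (Box C' b)) (Box (C \<union> C') (And a b)))"
| C5: "wf X D a \<Longrightarrow> derivable X D (Imp (Neg (Box {} (Neg a))) (Box UNIV a))"
| Ex: "x \<in> X \<Longrightarrow> set cs = D x \<Longrightarrow> derivable X D (Disj (map (Atom x) cs))"
| Uq: "x \<in> X \<Longrightarrow> c \<in> D x \<Longrightarrow> d \<in> D x \<Longrightarrow> c \<noteq> d \<Longrightarrow>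
        derivable X D (Imp (Atom x c) (Neg (Atom x d)))"
| MP: "derivable X D a \<Longrightarrow> derivable X D (Imp a b) \<Longrightarrow> derivable X D b"
| RE: "derivable X D (Iff a b) \<Longrightarrow> derivable X D (Iff (Box C a) (Box C b))"

text \<open>Strategy profiles are total functions 'ag \<Rightarrow> 'a (agents = all of type 'ag).\<close>

definition profile :: "('ag \<Rightarrow> 'a set) \<Rightarrow> ('ag \<Rightarrow> 'a) \<Rightarrow> bool" where
  "profile \<Sigma> \<sigma> \<longleftrightarrow> (\<forall>i. \<sigma> i \<in> \<Sigma> i)"

definition cl_model ::
  "'s set \<Rightarrow> ('ag \<Rightarrow> 'a set) \<Rightarrow> ('s \<Rightarrow> ('ag \<Rightarrow> 'a) \<Rightarrow> 's) \<Rightarrow> ('x \<Rightarrow> 'c \<Rightarrow> 's set) \<Rightarrow> bool" where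
  "cl_model S \<Sigma> out V \<longleftrightarrow> S \<noteq> {} \<and> (\<forall>i. \<Sigma> i \<noteq> {}) \<and>
     (\<forall>s\<in>S. \<forall>\<sigma>. profile \<Sigma> \<sigma> \<longrightarrow> out s \<sigma> \<in> S) \<and> (\<forall>x c. V x c \<subseteq> S)"

fun sat :: "('ag \<Rightarrow> 'a set) \<Rightarrow> ('s \<Rightarrow> ('ag \<Rightarrow> 'a) \<Rightarrow> 's) \<Rightarrow> ('x \<Rightarrow> 'c \<Rightarrow> 's set) \<Rightarrow> 's
    \<Rightarrow> ('ag, 'x, 'c) fm \<Rightarrow> bool" where
  "sat \<Sigma> out V s Top = True"
| "sat \<Sigma> out V s (Atom x c) = (s \<in> V x c)"
| "sat \<Sigma> out V s (Neg a) = (\<not> sat \<Sigma> out V s a)"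
| "sat \<Sigma> out V s (And a b) = (sat \<Sigma> out V s a \<and> sat \<Sigma> out V s b)"
| "sat \<Sigma> out V s (Box C a) =
     (\<exists>\<alpha>. (\<forall>i\<in>C. \<alpha> i \<in> \<Sigma> i) \<and>
        (\<forall>\<beta>. (\<forall>i\<in>-C. \<beta> i \<in> \<Sigma> i) \<longrightarrow>
           sat \<Sigma> out V (out s (\<lambda>i. if i \<in> C then \<alpha> i else \<beta> i)) a))"

definition coherent :: "'x set \<Rightarrow> ('x \<Rightarrow> 'c set) \<Rightarrow> 's set \<Rightarrow> ('x \<Rightarrow> 'c \<Rightarrow> 's set) \<Rightarrow> bool" where
  "coherent X D S V \<longleftrightarrow> (\<forall>s\<in>S. \<forall>x\<in>X.
     (\<exists>c\<in>D x. s \<in> V x c) \<and> (\<forall>c\<in>D x. \<forall>d\<in>D x. c \<noteq> d \<longrightarrow> s \<in> V x c \<longrightarrow> s \<notin> V x d))"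

definition coh_valid :: "'x set \<Rightarrow> ('x \<Rightarrow> 'c set) \<Rightarrow> 's itself \<Rightarrow> 'a itself
    \<Rightarrow> ('ag, 'x, 'c) fm \<Rightarrow> bool" where
  "coh_valid X D TYPE_S TYPE_A a \<longleftrightarrow>
     (\<forall>(S::'s set) (\<Sigma>::'ag \<Rightarrow> 'a set) out V. cl_model S \<Sigma> out V \<and> coherent X D S V \<longrightarrow>
        (\<forall>s\<in>S. sat \<Sigma> out V s a))"

end

theory Submission
  imports Defs "HOL-Library.Nat_Bijection"
begin


fun Conj :: "('ag,'x,'c) fm list \<Rightarrow> ('ag,'x,'c) fm" where
  "Conj [] = Top" | "Conj (a # as) = And a (Conj as)"

lemma peval_Conj: "peval v (Conj as) \<longleftrightarrow> (\<forall>a\<in>set as. peval v a)"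
  by (induction as) auto

lemma peval_Disj: "peval v (Disj as) \<longleftrightarrow> (\<exists>a\<in>set as. peval v a)"
  by (induction as) (auto simp: Bot_def Or_def)

lemma wf_Conj: "wf X D (Conj as) \<longleftrightarrow> (\<forall>a\<in>set as. wf X D a)"
  by (induction as) auto

lemma wf_Disj: "wf X D (Disj as) \<longleftrightarrow> (\<forall>a\<in>set as. wf X D a)"
  by (induction as) (auto simp: Bot_def Or_def)

lemma derivable_wf: "derivable X D a \<Longrightarrow> wf X D a"
  by (induction rule: derivable.induct) (auto simp: Imp_def Bot_def Iff_def wf_Disj)

lemma derive_from:
  assumes "\<forall>d\<in>set ds. derivable X D d" "wf X D b" "\<forall>v. (\<forall>d\<in>set ds. peval v d) \<longrightarrow> peval v b"
  shows "derivable X D b"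
  using assms
proof (induction ds arbitrary: b)
  case Nil
  then show ?case by (auto intro: derivable.Taut simp: taut_def)
next
  case (Cons d ds)
  have "wf X D d" using Cons.prems(1) derivable_wf by auto
  have "derivable X D (Imp d b)"
    using Cons.IH[of "Imp d b"] Cons.prems \<open>wf X D d\<close> by (auto simp: Imp_def)
  then show ?case using Cons.prems(1) derivable.MP by auto
qed

definition cons :: "'x set \<Rightarrow> ('x \<Rightarrow> 'c set) \<Rightarrow> ('ag::finite,'x,'c) fm set \<Rightarrow> bool" where
  "cons X D S \<longleftrightarrow> \<not>(\<exists>as. set as \<subseteq> S \<and> derivable X D (Neg (Conj as)))"

definition prv :: "'x set \<Rightarrow> ('x \<Rightarrow> 'c set) \<Rightarrow> ('ag::finite,'x,'c) fm set \<Rightarrow> ('ag,'x,'c) fm \<Rightarrow> bool" where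
  "prv X D S \<phi> \<longleftrightarrow> (\<exists>as. set as \<subseteq> S \<and> derivable X D (Imp (Conj as) \<phi>))"

lemma cons_mono: "cons X D T \<Longrightarrow> S \<subseteq> T \<Longrightarrow> cons X D S"
  unfolding cons_def by blast

lemma cons_incons:
  assumes "cons X D S" "set as \<subseteq> S" "\<forall>a\<in>set as. wf X D a" "\<forall>v. \<not>(\<forall>a\<in>set as. peval v a)"
  shows False
proof -
  have "derivable X D (Neg (Conj as))"
    by (rule derive_from[of "[]"]) (use assms in \<open>auto simp: wf_Conj peval_Conj\<close>)
  then show False using assms unfolding cons_def by blast
qed

lemma prv_wf: "prv X D S a \<Longrightarrow> wf X D a"
  unfolding prv_def by (auto dest!: derivable_wf simp: Imp_def)

lemma prv_derivable: "derivable X D \<phi> \<Longrightarrow> prv X D S \<phi>"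
  unfolding prv_def
  apply (rule exI[of _ "[]"])
  using derive_from[of "[\<phi>]" X D "Imp (Conj []) \<phi>"] derivable_wf[of X D \<phi>] by (auto simp: Imp_def)

lemma prv_mem: "\<phi> \<in> S \<Longrightarrow> wf X D \<phi> \<Longrightarrow> prv X D S \<phi>"
  unfolding prv_def
  apply (rule exI[of _ "[\<phi>]"])
  using derive_from[of "[]" X D "Imp (Conj [\<phi>]) \<phi>"] by (auto simp: Imp_def)

lemma prv_mp:
  assumes "prv X D S a" "prv X D S (Imp a b)"
  shows "prv X D S b"
proof -
  obtain l1 l2 where l: "set l1 \<subseteq> S" "derivable X D (Imp (Conj l1) a)" "set l2 \<subseteq> S"
     "derivable X D (Imp (Conj l2) (Imp a b))"
    using assms unfolding prv_def by blast
  have w: "wf X D (Conj l1)" "wf X D (Conj l2)" "wf X D b"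
    using derivable_wf[OF l(2)] derivable_wf[OF l(4)] by (auto simp: Imp_def)
  have "derivable X D (Imp (Conj (l1 @ l2)) b)"
    by (rule derive_from[of "[Imp (Conj l1) a, Imp (Conj l2) (Imp a b)]"])
       (use l w in \<open>auto simp: Imp_def peval_Conj wf_Conj\<close>)
  then show ?thesis unfolding prv_def using l by (intro exI[of _ "l1@l2"]) auto
qed

lemma prv_prop:
  assumes "\<forall>a\<in>set as. prv X D S a" "wf X D b" "\<forall>v. (\<forall>a\<in>set as. peval v a) \<longrightarrow> peval v b"
  shows "prv X D S b"
  using assms
proof (induction as arbitrary: b)
  case Nil
  then show ?case using prv_derivable derive_from[of "[]" X D b] by auto
next
  case (Cons a as)
  have "wf X D a" using Cons.prems(1) prv_wf by auto
  have "prv X D S (Imp a b)" using Cons.IH[of "Imp a b"] Cons.prems \<open>wf X D a\<close> by (auto simp: Imp_def)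
  then show ?case using prv_mp Cons.prems(1) by auto
qed

lemma cons_contra: "cons X D S \<Longrightarrow> prv X D S a \<Longrightarrow> prv X D S (Neg a) \<Longrightarrow> False"
proof -
  assume c: "cons X D S" and p: "prv X D S a" "prv X D S (Neg a)"
  have "prv X D S (Neg Top)" by (rule prv_prop[of "[a, Neg a]"]) (use p in auto)
  then obtain as where "set as \<subseteq> S" "derivable X D (Imp (Conj as) (Neg Top))" unfolding prv_def by blast
  moreover have "derivable X D (Neg (Conj as))"
    by (rule derive_from[of "[Imp (Conj as) (Neg Top)]"])
       (use calculation derivable_wf[OF calculation(2)] in \<open>auto simp: Imp_def\<close>)
  ultimately show False using c unfolding cons_def by blast
qed

lemma der_mono:
  assumes h: "derivable X D (Imp a b)"
  shows "derivable X D (Imp (Box C a) (Box C b))"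
proof -
  have w: "wf X D a" "wf X D b" using derivable_wf[OF h] by (auto simp: Imp_def)
  have "derivable X D (Iff a (And b a))"
    by (rule derive_from[of "[Imp a b]"]) (use h w in \<open>auto simp: Iff_def Imp_def\<close>)
  then have r: "derivable X D (Iff (Box C a) (Box C (And b a)))" by (rule derivable.RE)
  have c1: "derivable X D (Imp (Box C (And b a)) (Box C b))" using derivable.C1[OF w(2) w(1)] .
  show ?thesis
    by (rule derive_from[of "[Iff (Box C a) (Box C (And b a)), Imp (Box C (And b a)) (Box C b)]"])
       (use r c1 w in \<open>auto simp: Iff_def Imp_def\<close>)
qed

lemma prv_mono: "derivable X D (Imp a b) \<Longrightarrow> prv X D S (Box C a) \<Longrightarrow> prv X D S (Box C b)"
  using prv_mp prv_derivable der_mono by metis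

lemma prv_C4:
  assumes "C \<inter> C' = {}" "prv X D S (Box C a)" "prv X D S (Box C' b)"
  shows "prv X D S (Box (C \<union> C') (And a b))"
proof -
  have w: "wf X D a" "wf X D b" using assms prv_wf by fastforce+
  have "prv X D S (Imp (And (Box C a) (Box C' b)) (Box (C \<union> C') (And a b)))"
    using derivable.C4[OF w assms(1)] prv_derivable by blast
  then show ?thesis
    by (intro prv_prop[of "[Box C a, Box C' b, Imp (And (Box C a) (Box C' b)) (Box (C \<union> C') (And a b))]"])
       (use assms w in \<open>auto simp: Imp_def\<close>)
qed

lemma prv_cmono:
  assumes "D' \<subseteq> C" "prv X D S (Box D' a)"
  shows "prv X D S (Box C a)"
proof -
  have w: "wf X D a" using assms prv_wf by fastforce
  have "prv X D S (Box (C - D') Top)" using derivable.C3 prv_derivable by blast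
  then have "prv X D S (Box (D' \<union> (C - D')) (And a Top))" using prv_C4 assms by blast
  moreover have "D' \<union> (C - D') = C" using assms by blast
  moreover have "derivable X D (Imp (And a Top) a)"
    by (rule derive_from[of "[]"]) (use w in \<open>auto simp: Imp_def\<close>)
  ultimately show ?thesis using prv_mono by metis
qed

lemma prv_C2: "cons X D S \<Longrightarrow> prv X D S (Box C Bot) \<Longrightarrow> False"
  using cons_contra prv_derivable derivable.C2 by metis

lemma cons_ext:
  assumes "cons X D S"
  shows "cons X D (insert \<psi> S) \<or> cons X D (insert (Neg \<psi>) S)"
proof (rule ccontr)
  assume "\<not> ?thesis"
  then obtain l1 l2 where l: "set l1 \<subseteq> insert \<psi> S" "derivable X D (Neg (Conj l1))"
    "set l2 \<subseteq> insert (Neg \<psi>) S" "derivable X D (Neg (Conj l2))"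
    unfolding cons_def by blast
  define l where "l = filter (\<lambda>a. a \<noteq> \<psi>) l1 @ filter (\<lambda>a. a \<noteq> Neg \<psi>) l2"
  have sl: "set l \<subseteq> S" using l unfolding l_def by auto
  have w: "\<forall>a\<in>set l1. wf X D a" "\<forall>a\<in>set l2. wf X D a"
    using derivable_wf[OF l(2)] derivable_wf[OF l(4)] by (auto simp: wf_Conj)
  have "derivable X D (Neg (Conj l))"
  proof (rule derive_from[of "[Neg (Conj l1), Neg (Conj l2)]"])
    show "\<forall>d\<in>set [Neg (Conj l1), Neg (Conj l2)]. derivable X D d" using l by auto
    show "wf X D (Neg (Conj l))" using w by (auto simp: l_def wf_Conj)
    show "\<forall>v. (\<forall>d\<in>set [Neg (Conj l1), Neg (Conj l2)]. peval v d) \<longrightarrow> peval v (Neg (Conj l))"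
    proof (intro allI impI)
      fix v assume h: "\<forall>d\<in>set [Neg (Conj l1), Neg (Conj l2)]. peval v d"
      show "peval v (Neg (Conj l))"
      proof (cases "peval v \<psi>")
        case True
        from h obtain a where a: "a \<in> set l1" "\<not> peval v a" by (auto simp: peval_Conj)
        with True have "a \<in> set l" unfolding l_def by (cases "a = \<psi>") auto
        then show ?thesis using a(2) by (auto simp: peval_Conj)
      next
        case False
        from h obtain a where a: "a \<in> set l2" "\<not> peval v a" by (auto simp: peval_Conj)
        with False have "a \<in> set l" unfolding l_def by (cases "a = Neg \<psi>") auto
        then show ?thesis using a(2) by (auto simp: peval_Conj)
      qed
    qed
  qed
  then show False using assms sl unfolding cons_def by blast
qed



locale clset =
  fixes X :: "'x set" and D :: "'x \<Rightarrow> 'c set" and K :: "('ag::finite,'x,'c) fm set"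
  assumes ts: "typed_sig X D" and finK: "finite K" and wfK: "\<And>a. a \<in> K \<Longrightarrow> wf X D a"
  and subNeg: "\<And>a. Neg a \<in> K \<Longrightarrow> a \<in> K"
  and subAnd: "\<And>a b. And a b \<in> K \<Longrightarrow> a \<in> K \<and> b \<in> K"
  and subBox: "\<And>C a. Box C a \<in> K \<Longrightarrow> a \<in> K"
  and atK: "\<And>x c. x \<in> X \<Longrightarrow> c \<in> D x \<Longrightarrow> Atom x c \<in> K"
begin

definition atom :: "('ag,'x,'c) fm set \<Rightarrow> bool" where
  "atom \<Delta> \<longleftrightarrow> \<Delta> \<subseteq> K \<union> Neg ` K \<and> (\<forall>\<psi>\<in>K. \<psi> \<in> \<Delta> \<or> Neg \<psi> \<in> \<Delta>) \<and> cons X D \<Delta>"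

lemma atom_sub: "atom \<Delta> \<Longrightarrow> \<Delta> \<subseteq> K \<union> Neg ` K"
  unfolding atom_def by (elim conjE)
lemma atom_compl: "atom \<Delta> \<Longrightarrow> \<psi> \<in> K \<Longrightarrow> \<psi> \<in> \<Delta> \<or> Neg \<psi> \<in> \<Delta>"
  unfolding atom_def by (elim conjE) (erule bspec)
lemma atom_cons: "atom \<Delta> \<Longrightarrow> cons X D \<Delta>"
  unfolding atom_def by (elim conjE)

lemma lind_list:
  "cons X D S \<Longrightarrow> set l \<subseteq> K \<Longrightarrow> \<exists>\<Delta>. \<Delta> \<subseteq> set l \<union> Neg ` set l \<and> (\<forall>\<psi>\<in>set l. \<psi> \<in> \<Delta> \<or> Neg \<psi> \<in> \<Delta>) \<and> cons X D (\<Delta> \<union> S)"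
proof (induction l arbitrary: S)
  case Nil
  then show ?case by (intro exI[of _ "{}"]) auto
next
  case (Cons \<psi> l)
  from cons_ext[OF Cons.prems(1)] show ?case
  proof
    assume "cons X D (insert \<psi> S)"
    from Cons.IH[OF this] Cons.prems obtain \<Delta> where
      "\<Delta> \<subseteq> set l \<union> Neg ` set l" "\<forall>\<psi>\<in>set l. \<psi> \<in> \<Delta> \<or> Neg \<psi> \<in> \<Delta>" "cons X D (\<Delta> \<union> insert \<psi> S)" by auto
    then show ?thesis by (intro exI[of _ "insert \<psi> \<Delta>"]) auto
  next
    assume "cons X D (insert (Neg \<psi>) S)"
    from Cons.IH[OF this] Cons.prems obtain \<Delta> where
      "\<Delta> \<subseteq> set l \<union> Neg ` set l" "\<forall>\<psi>\<in>set l. \<psi> \<in> \<Delta> \<or> Neg \<psi> \<in> \<Delta>" "cons X D (\<Delta> \<union> insert (Neg \<psi>) S)" by auto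
    then show ?thesis by (intro exI[of _ "insert (Neg \<psi>) \<Delta>"]) auto
  qed
qed

lemma lindenbaum: "cons X D S \<Longrightarrow> \<exists>\<Delta>. atom \<Delta> \<and> cons X D (\<Delta> \<union> S)"
proof -
  assume c: "cons X D S"
  obtain l where l: "set l = K" using finite_list[OF finK] by blast
  from lind_list[of S l, OF c] l obtain \<Delta> where
    "\<Delta> \<subseteq> K \<union> Neg ` K" "\<forall>\<psi>\<in>K. \<psi> \<in> \<Delta> \<or> Neg \<psi> \<in> \<Delta>" "cons X D (\<Delta> \<union> S)" by auto
  note h = this
  have "cons X D \<Delta>" using h(3) by (rule cons_mono) blast
  then have "atom \<Delta>" unfolding atom_def using h(1,2) by (intro conjI)
  then show ?thesis using h(3) by blast
qed

lemma finite_atoms: "finite {\<Delta>. atom \<Delta>}"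
proof -
  have "{\<Delta>. atom \<Delta>} \<subseteq> Pow (K \<union> Neg ` K)" using atom_sub by blast
  moreover have "finite (Pow (K \<union> Neg ` K))" using finK by (intro finite_Pow_iff[THEN iffD2] finite_UnI finite_imageI)
  ultimately show ?thesis by (rule finite_subset)
qed

lemma atom_finite: "atom \<Delta> \<Longrightarrow> finite \<Delta>"
  proof -
  assume "atom \<Delta>"
  then have "\<Delta> \<subseteq> K \<union> Neg ` K" by (rule atom_sub)
  moreover have "finite (K \<union> Neg ` K)" using finK by (intro finite_UnI finite_imageI)
  ultimately show ?thesis by (rule finite_subset)
qed

lemma atom_wf: "atom \<Delta> \<Longrightarrow> a \<in> \<Delta> \<Longrightarrow> wf X D a"
  using atom_sub wfK by fastforce

lemma atom_neg: "atom \<Delta> \<Longrightarrow> \<psi> \<in> K \<Longrightarrow> Neg \<psi> \<in> \<Delta> \<longleftrightarrow> \<psi> \<notin> \<Delta>"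
proof -
  assume a: "atom \<Delta>" "\<psi> \<in> K"
  have "\<not> (\<psi> \<in> \<Delta> \<and> Neg \<psi> \<in> \<Delta>)"
  proof
    assume h: "\<psi> \<in> \<Delta> \<and> Neg \<psi> \<in> \<Delta>"
    show False
      by (rule cons_incons[of X D \<Delta> "[\<psi>, Neg \<psi>]"]) (use atom_cons[OF a(1)] h wfK[OF a(2)] in simp_all)
  qed
  moreover have "\<psi> \<in> \<Delta> \<or> Neg \<psi> \<in> \<Delta>" using atom_compl[OF a] .
  ultimately show ?thesis by blast
qed

lemma atom_Box_K: "atom \<Delta> \<Longrightarrow> Box C a \<in> \<Delta> \<Longrightarrow> Box C a \<in> K"
  using atom_sub by fastforce

lemma cons_K_mem:
  assumes "atom \<Delta>" "cons X D (\<Delta> \<union> R)" "\<phi> \<in> R" "\<phi> \<in> K"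
  shows "\<phi> \<in> \<Delta>"
proof (rule ccontr)
  assume "\<phi> \<notin> \<Delta>"
  then have "Neg \<phi> \<in> \<Delta>" using atom_neg[OF assms(1) assms(4)] by simp
  show False
    by (rule cons_incons[of X D "\<Delta> \<union> R" "[\<phi>, Neg \<phi>]"]) (use assms wfK[OF assms(4)] \<open>Neg \<phi> \<in> \<Delta>\<close> in simp_all)
qed

lemma cons_K_nmem:
  assumes "atom \<Delta>" "cons X D (\<Delta> \<union> R)" "Neg \<phi> \<in> R" "\<phi> \<in> K"
  shows "\<phi> \<notin> \<Delta>"
proof
  assume "\<phi> \<in> \<Delta>"
  show False
    by (rule cons_incons[of X D "\<Delta> \<union> R" "[\<phi>, Neg \<phi>]"]) (use assms wfK[OF assms(4)] \<open>\<phi> \<in> \<Delta>\<close> in simp_all)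
qed

end



context clset
begin

definition bl :: "('ag,'x,'c) fm set \<Rightarrow> ('ag set \<times> ('ag,'x,'c) fm) list" where
  "bl \<Gamma> = (SOME l. set l = {(C,\<phi>). Box C \<phi> \<in> \<Gamma>})"

lemma bl_set: "atom \<Gamma> \<Longrightarrow> set (bl \<Gamma>) = {(C,\<phi>). Box C \<phi> \<in> \<Gamma>}"
proof -
  assume a: "atom \<Gamma>"
  let ?f = "\<lambda>f. case f of Box C \<phi> \<Rightarrow> (C,\<phi>) | _ \<Rightarrow> undefined"
  have "{(C,\<phi>). Box C \<phi> \<in> \<Gamma>} \<subseteq> ?f ` \<Gamma>"
  proof clarify
    fix C \<phi> assume "Box C \<phi> \<in> \<Gamma>"
    then show "(C,\<phi>) \<in> ?f ` \<Gamma>" by (rule rev_image_eqI) simp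
  qed
  moreover have "finite (?f ` \<Gamma>)" using atom_finite[OF a] by (rule finite_imageI)
  ultimately have "finite {(C,\<phi>). Box C \<phi> \<in> \<Gamma>}" by (rule finite_subset)
  then have "\<exists>l. set l = {(C,\<phi>). Box C \<phi> \<in> \<Gamma>}" by (rule finite_list)
  then show ?thesis unfolding bl_def by (rule someI_ex)
qed

lemma bl_box: "atom \<Gamma> \<Longrightarrow> k < length (bl \<Gamma>) \<Longrightarrow> Box (fst (bl \<Gamma> ! k)) (snd (bl \<Gamma> ! k)) \<in> \<Gamma>"
proof -
  assume a: "atom \<Gamma>" "k < length (bl \<Gamma>)"
  then have m: "bl \<Gamma> ! k \<in> set (bl \<Gamma>)" by simp
  obtain C \<phi> where e: "bl \<Gamma> ! k = (C,\<phi>)" by (cases "bl \<Gamma> ! k")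
  with m bl_set[OF a(1)] have "Box C \<phi> \<in> \<Gamma>" by auto
  then show ?thesis using e by simp
qed

definition act :: "('ag,'x,'c) fm set \<Rightarrow> ('ag \<Rightarrow> nat) \<Rightarrow> nat set" where
  "act \<Gamma> \<pi> = {k. k < length (bl \<Gamma>) \<and> (\<forall>i\<in>fst (bl \<Gamma> ! k). \<pi> i = Suc k)}"

definition G :: "('ag,'x,'c) fm set \<Rightarrow> ('ag,'x,'c) fm set" where
  "G \<Gamma> = {Neg \<psi> | \<psi>. Box UNIV \<psi> \<in> K \<and> Box UNIV \<psi> \<notin> \<Gamma>}"

definition R :: "('ag,'x,'c) fm set \<Rightarrow> ('ag \<Rightarrow> nat) \<Rightarrow> ('ag,'x,'c) fm set" where
  "R \<Gamma> \<pi> = (\<lambda>k. snd (bl \<Gamma> ! k)) ` act \<Gamma> \<pi> \<union> G \<Gamma>"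

definition Dc :: "('ag,'x,'c) fm set \<Rightarrow> ('ag \<Rightarrow> nat) \<Rightarrow> 'ag set" where
  "Dc \<Gamma> \<pi> = (\<Union>k\<in>act \<Gamma> \<pi>. fst (bl \<Gamma> ! k))"

lemma R_wf: "atom \<Gamma> \<Longrightarrow> a \<in> R \<Gamma> \<pi> \<Longrightarrow> wf X D a"
proof -
  assume a: "atom \<Gamma>" "a \<in> R \<Gamma> \<pi>"
  show ?thesis
  proof (cases "a \<in> G \<Gamma>")
    case True
    then obtain \<psi> where "a = Neg \<psi>" "Box UNIV \<psi> \<in> K" unfolding G_def by blast
    then show ?thesis using wfK[of "Box UNIV \<psi>"] by simp
  next
    case False
    then obtain k where k: "k \<in> act \<Gamma> \<pi>" "a = snd (bl \<Gamma> ! k)" using a(2) unfolding R_def by blast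
    then have "k < length (bl \<Gamma>)" unfolding act_def by blast
    from atom_wf[OF a(1) bl_box[OF a(1) this]] k(2) show ?thesis by simp
  qed
qed

lemma act_disj: "k \<in> act \<Gamma> \<pi> \<Longrightarrow> k' \<in> act \<Gamma> \<pi> \<Longrightarrow> k \<noteq> k' \<Longrightarrow> fst (bl \<Gamma> ! k) \<inter> fst (bl \<Gamma> ! k') = {}"
  unfolding act_def by fastforce

lemma box_act:
  assumes a: "atom \<Gamma>"
  shows "distinct ks \<Longrightarrow> set ks \<subseteq> act \<Gamma> \<pi> \<Longrightarrow>
    prv X D \<Gamma> (Box (\<Union>k\<in>set ks. fst (bl \<Gamma> ! k)) (Conj (map (\<lambda>k. snd (bl \<Gamma> ! k)) ks)))"
proof (induction ks)
  case Nil
  show ?case using prv_derivable[OF derivable.C3] by simp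
next
  case (Cons k ks)
  have k: "k \<in> act \<Gamma> \<pi>" using Cons.prems by simp
  then have kl: "k < length (bl \<Gamma>)" unfolding act_def by blast
  have p1: "prv X D \<Gamma> (Box (fst (bl \<Gamma> ! k)) (snd (bl \<Gamma> ! k)))"
    using prv_mem[OF bl_box[OF a kl] atom_wf[OF a bl_box[OF a kl]]] .
  have dj: "fst (bl \<Gamma> ! k) \<inter> (\<Union>k'\<in>set ks. fst (bl \<Gamma> ! k')) = {}"
  proof -
    have "\<forall>k'\<in>set ks. fst (bl \<Gamma> ! k) \<inter> fst (bl \<Gamma> ! k') = {}"
    proof
      fix k' assume "k' \<in> set ks"
      then have "k' \<in> act \<Gamma> \<pi>" "k \<noteq> k'" using Cons.prems by auto
      then show "fst (bl \<Gamma> ! k) \<inter> fst (bl \<Gamma> ! k') = {}" using act_disj[OF k] by blast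
    qed
    then show ?thesis by blast
  qed
  have ih: "prv X D \<Gamma> (Box (\<Union>k\<in>set ks. fst (bl \<Gamma> ! k)) (Conj (map (\<lambda>k. snd (bl \<Gamma> ! k)) ks)))"
    using Cons.IH Cons.prems by simp
  from prv_C4[OF dj p1 ih] show ?case by simp
qed

lemma box_G:
  assumes a: "atom \<Gamma>"
  shows "set gs \<subseteq> G \<Gamma> \<Longrightarrow> prv X D \<Gamma> (Box {} (Conj gs))"
proof (induction gs)
  case Nil
  show ?case using prv_derivable[OF derivable.C3] by simp
next
  case (Cons g gs)
  then obtain \<psi> where g: "g = Neg \<psi>" "Box UNIV \<psi> \<in> K" "Box UNIV \<psi> \<notin> \<Gamma>" unfolding G_def by auto
  have w: "wf X D \<psi>" using wfK[OF g(2)] by simp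
  have n: "Neg (Box UNIV \<psi>) \<in> \<Gamma>" using atom_neg[OF a g(2)] g(3) by simp
  have p0: "prv X D \<Gamma> (Neg (Box UNIV \<psi>))" using prv_mem[OF n] w by simp
  have p5: "prv X D \<Gamma> (Imp (Neg (Box {} (Neg \<psi>))) (Box UNIV \<psi>))"
    using prv_derivable[OF derivable.C5[OF w]] .
  have p1: "prv X D \<Gamma> (Box {} (Neg \<psi>))"
    by (rule prv_prop[of "[Neg (Box UNIV \<psi>), Imp (Neg (Box {} (Neg \<psi>))) (Box UNIV \<psi>)]"])
       (use p0 p5 w in \<open>auto simp: Imp_def\<close>)
  have ih: "prv X D \<Gamma> (Box {} (Conj gs))" using Cons.IH Cons.prems by simp
  from prv_C4[of "{}" "{}", OF _ p1 ih] show ?case using g(1) by simp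
qed

lemma finite_act: "finite (act \<Gamma> \<pi>)"
  by (rule finite_subset[of _ "{..<length (bl \<Gamma>)}"]) (auto simp: act_def)

lemma finite_G: "finite (G \<Gamma>)"
proof -
  have "G \<Gamma> \<subseteq> (\<lambda>f. case f of Box C a \<Rightarrow> Neg a | _ \<Rightarrow> Top) ` K"
  proof
    fix a assume "a \<in> G \<Gamma>"
    then obtain \<psi> where "a = Neg \<psi>" "Box UNIV \<psi> \<in> K" unfolding G_def by blast
    then show "a \<in> (\<lambda>f. case f of Box C a \<Rightarrow> Neg a | _ \<Rightarrow> Top) ` K" by (intro rev_image_eqI) auto
  qed
  moreover have "finite ((\<lambda>f. case f of Box C a \<Rightarrow> Neg a | _ \<Rightarrow> Top) ` K)" using finK by (rule finite_imageI)
  ultimately show ?thesis by (rule finite_subset)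
qed

lemma R_box:
  assumes a: "atom \<Gamma>" and rs: "set rs \<subseteq> R \<Gamma> \<pi>"
  shows "prv X D \<Gamma> (Box (Dc \<Gamma> \<pi>) (Conj rs))"
proof -
  define ks where "ks = sorted_list_of_set (act \<Gamma> \<pi>)"
  have ks: "distinct ks" "set ks = act \<Gamma> \<pi>" unfolding ks_def using finite_act by auto
  obtain gs where gs: "set gs = G \<Gamma>" using finite_list[OF finite_G] by blast
  define \<phi>s where "\<phi>s = map (\<lambda>k. snd (bl \<Gamma> ! k)) ks"
  have p1: "prv X D \<Gamma> (Box (Dc \<Gamma> \<pi>) (Conj \<phi>s))"
    using box_act[OF a ks(1), where \<pi>=\<pi>] ks(2) unfolding Dc_def \<phi>s_def by simp
  have p2: "prv X D \<Gamma> (Box {} (Conj gs))" using box_G[OF a] gs by simp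
  have p3: "prv X D \<Gamma> (Box (Dc \<Gamma> \<pi>) (And (Conj \<phi>s) (Conj gs)))"
    using prv_C4[of "Dc \<Gamma> \<pi>" "{}", OF _ p1 p2] by simp
  have w1: "wf X D (And (Conj \<phi>s) (Conj gs))" using prv_wf[OF p3] by simp
  have w2: "wf X D (Conj rs)" unfolding wf_Conj using rs R_wf[OF a] by blast
  have sub: "set rs \<subseteq> set \<phi>s \<union> set gs" using rs ks(2) gs unfolding R_def \<phi>s_def by auto
  have "derivable X D (Imp (And (Conj \<phi>s) (Conj gs)) (Conj rs))"
    by (rule derive_from[of "[]"]) (use w1 w2 sub in \<open>auto simp: Imp_def peval_Conj\<close>)
  then show ?thesis using prv_mono p3 by blast
qed

lemma cons_R: "atom \<Gamma> \<Longrightarrow> cons X D (R \<Gamma> \<pi>)"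
proof -
  assume a: "atom \<Gamma>"
  show ?thesis unfolding cons_def
  proof
    assume "\<exists>as. set as \<subseteq> R \<Gamma> \<pi> \<and> derivable X D (Neg (Conj as))"
    then obtain rs where rs: "set rs \<subseteq> R \<Gamma> \<pi>" "derivable X D (Neg (Conj rs))" by blast
    have "derivable X D (Imp (Conj rs) Bot)"
      by (rule derive_from[of "[Neg (Conj rs)]"]) (use rs derivable_wf[OF rs(2)] in \<open>auto simp: Imp_def Bot_def\<close>)
    then have "prv X D \<Gamma> (Box (Dc \<Gamma> \<pi>) Bot)" using prv_mono R_box[OF a rs(1)] by blast
    then show False using prv_C2 atom_cons[OF a] by blast
  qed
qed

lemma Dc_sub: "\<forall>i. i \<notin> C \<longrightarrow> \<pi> i = 0 \<Longrightarrow> Dc \<Gamma> \<pi> \<subseteq> C"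
  unfolding Dc_def act_def by fastforce

lemma cons_R_neg:
  assumes a: "atom \<Gamma>" and b: "Box C \<psi> \<in> K" "Box C \<psi> \<notin> \<Gamma>" and p: "\<forall>i. i \<notin> C \<longrightarrow> \<pi> i = 0"
  shows "cons X D (insert (Neg \<psi>) (R \<Gamma> \<pi>))"
  unfolding cons_def
proof
  assume "\<exists>as. set as \<subseteq> insert (Neg \<psi>) (R \<Gamma> \<pi>) \<and> derivable X D (Neg (Conj as))"
  then obtain rs where rs: "set rs \<subseteq> insert (Neg \<psi>) (R \<Gamma> \<pi>)" "derivable X D (Neg (Conj rs))" by blast
  define rs' where "rs' = filter (\<lambda>a. a \<noteq> Neg \<psi>) rs"
  have rs': "set rs' \<subseteq> R \<Gamma> \<pi>" using rs(1) unfolding rs'_def by auto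
  have w: "wf X D \<psi>" using wfK[OF b(1)] by simp
  have w2: "wf X D (Conj rs')" using derivable_wf[OF rs(2)] unfolding rs'_def by (simp add: wf_Conj)
  have "derivable X D (Imp (Conj rs') \<psi>)"
  proof (rule derive_from[of "[Neg (Conj rs)]"])
    show "\<forall>d\<in>set [Neg (Conj rs)]. derivable X D d" using rs(2) by simp
    show "wf X D (Imp (Conj rs') \<psi>)" using w w2 by (simp add: Imp_def)
    show "\<forall>v. (\<forall>d\<in>set [Neg (Conj rs)]. peval v d) \<longrightarrow> peval v (Imp (Conj rs') \<psi>)"
    proof (intro allI impI)
      fix v assume h: "\<forall>d\<in>set [Neg (Conj rs)]. peval v d"
      show "peval v (Imp (Conj rs') \<psi>)"
      proof (cases "peval v \<psi>")
        case True
        then show ?thesis by (simp add: Imp_def)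
      next
        case False
        from h obtain a where a: "a \<in> set rs" "\<not> peval v a" by (auto simp: peval_Conj)
        with False have "a \<in> set rs'" unfolding rs'_def by (cases "a = Neg \<psi>") auto
        then show ?thesis using a(2) by (auto simp: peval_Conj Imp_def)
      qed
    qed
  qed
  then have "prv X D \<Gamma> (Box (Dc \<Gamma> \<pi>) \<psi>)" using prv_mono R_box[OF a rs'] by blast
  then have p1: "prv X D \<Gamma> (Box C \<psi>)" using prv_cmono Dc_sub[OF p] by blast
  have n: "Neg (Box C \<psi>) \<in> \<Gamma>" using atom_neg[OF a b(1)] b(2) by simp
  have p2: "prv X D \<Gamma> (Neg (Box C \<psi>))" using prv_mem[OF n] w by simp
  show False using cons_contra[OF atom_cons[OF a] p1 p2] .
qed

end



context clset
begin

definition cands :: "('ag,'x,'c) fm set \<Rightarrow> ('ag \<Rightarrow> nat) \<Rightarrow> ('ag,'x,'c) fm set set" where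
  "cands \<Gamma> \<pi> = {\<Delta>. atom \<Delta> \<and> cons X D (\<Delta> \<union> R \<Gamma> \<pi>)}"

definition clist :: "('ag,'x,'c) fm set \<Rightarrow> ('ag \<Rightarrow> nat) \<Rightarrow> ('ag,'x,'c) fm set list" where
  "clist \<Gamma> \<pi> = (SOME l. set l = cands \<Gamma> \<pi>)"

definition out0 :: "('ag,'x,'c) fm set \<Rightarrow> ('ag \<Rightarrow> nat \<times> nat) \<Rightarrow> ('ag,'x,'c) fm set" where
  "out0 \<Gamma> \<sigma> = (let l = clist \<Gamma> (\<lambda>i. fst (\<sigma> i)) in l ! ((\<Sum>i\<in>UNIV. snd (\<sigma> i)) mod length l))"

definition V0 :: "'x \<Rightarrow> 'c \<Rightarrow> ('ag,'x,'c) fm set set" where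
  "V0 x c = {\<Delta>. atom \<Delta> \<and> Atom x c \<in> \<Delta>}"

lemma clist_set: "set (clist \<Gamma> \<pi>) = cands \<Gamma> \<pi>"
proof -
  have "cands \<Gamma> \<pi> \<subseteq> {\<Delta>. atom \<Delta>}" unfolding cands_def by blast
  then have "finite (cands \<Gamma> \<pi>)" using finite_atoms by (rule finite_subset)
  then have "\<exists>l. set l = cands \<Gamma> \<pi>" by (rule finite_list)
  then show ?thesis unfolding clist_def by (rule someI_ex)
qed

lemma cands_ne: "atom \<Gamma> \<Longrightarrow> cands \<Gamma> \<pi> \<noteq> {}"
proof -
  assume a: "atom \<Gamma>"
  obtain \<Delta> where "atom \<Delta>" "cons X D (\<Delta> \<union> R \<Gamma> \<pi>)" using lindenbaum[OF cons_R[OF a]] by blast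
  then show ?thesis unfolding cands_def by blast
qed

lemma out0_in: "atom \<Gamma> \<Longrightarrow> out0 \<Gamma> \<sigma> \<in> cands \<Gamma> (\<lambda>i. fst (\<sigma> i))"
proof -
  assume a: "atom \<Gamma>"
  define l where "l = clist \<Gamma> (\<lambda>i. fst (\<sigma> i))"
  have sl: "set l = cands \<Gamma> (\<lambda>i. fst (\<sigma> i))" unfolding l_def by (rule clist_set)
  then have "length l > 0" using cands_ne[OF a] by (cases l) auto
  then have "l ! ((\<Sum>i\<in>UNIV. snd (\<sigma> i)) mod length l) \<in> set l" by simp
  then show ?thesis unfolding out0_def Let_def l_def[symmetric] using sl by simp
qed

lemma out0_atom: "atom \<Gamma> \<Longrightarrow> atom (out0 \<Gamma> \<sigma>)"
  using out0_in unfolding cands_def by blast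

lemma pos:
  assumes a: "atom \<Gamma>" and b: "Box C \<phi> \<in> \<Gamma>"
  shows "\<exists>\<alpha>. \<forall>\<beta>. \<phi> \<in> out0 \<Gamma> (\<lambda>i. if i \<in> C then \<alpha> i else \<beta> i)"
proof -
  have "(C,\<phi>) \<in> set (bl \<Gamma>)" using bl_set[OF a] b by simp
  then obtain k where k: "k < length (bl \<Gamma>)" "bl \<Gamma> ! k = (C,\<phi>)" by (auto simp: in_set_conv_nth)
  have \<phi>K: "\<phi> \<in> K" using subBox atom_Box_K[OF a b] by blast
  show ?thesis
  proof (intro exI allI)
    fix \<beta> :: "'ag \<Rightarrow> nat \<times> nat"
    define \<sigma> where "\<sigma> = (\<lambda>i. if i \<in> C then (Suc k, 0) else \<beta> i)"
    have "k \<in> act \<Gamma> (\<lambda>i. fst (\<sigma> i))" unfolding act_def \<sigma>_def using k by simp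
    then have "\<phi> \<in> R \<Gamma> (\<lambda>i. fst (\<sigma> i))" unfolding R_def using k(2) by (intro UnI1 rev_image_eqI) auto
    moreover have "out0 \<Gamma> \<sigma> \<in> cands \<Gamma> (\<lambda>i. fst (\<sigma> i))" by (rule out0_in[OF a])
    ultimately have "\<phi> \<in> out0 \<Gamma> \<sigma>" unfolding cands_def using cons_K_mem \<phi>K by blast
    then show "\<phi> \<in> out0 \<Gamma> (\<lambda>i. if i \<in> C then (\<lambda>i. (Suc k, 0)) i else \<beta> i)" unfolding \<sigma>_def by simp
  qed
qed

lemma neg:
  assumes a: "atom \<Gamma>" and b: "Box C \<psi> \<in> K" "Box C \<psi> \<notin> \<Gamma>"
  shows "\<exists>\<beta>. \<psi> \<notin> out0 \<Gamma> (\<lambda>i. if i \<in> C then \<alpha> i else \<beta> i)"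
proof (cases "C = UNIV")
  case True
  have \<psi>K: "\<psi> \<in> K" using subBox b(1) by blast
  let ?\<sigma> = "(\<lambda>i. if i \<in> C then \<alpha> i else (0,0))"
  have "Neg \<psi> \<in> G \<Gamma>" unfolding G_def using b True by blast
  then have "Neg \<psi> \<in> R \<Gamma> (\<lambda>i. fst (?\<sigma> i))" unfolding R_def by blast
  moreover have "out0 \<Gamma> ?\<sigma> \<in> cands \<Gamma> (\<lambda>i. fst (?\<sigma> i))" by (rule out0_in[OF a])
  ultimately have "\<psi> \<notin> out0 \<Gamma> ?\<sigma>" unfolding cands_def using cons_K_nmem \<psi>K by blast
  then show ?thesis by (rule exI[where x = "\<lambda>_. (0,0)"])
next
  case False
  then obtain j where j: "j \<notin> C" by blast
  have \<psi>K: "\<psi> \<in> K" using subBox b(1) by blast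
  define \<pi>0 where "\<pi>0 = (\<lambda>i. if i \<in> C then fst (\<alpha> i) else 0)"
  have "cons X D (insert (Neg \<psi>) (R \<Gamma> \<pi>0))" by (rule cons_R_neg[OF a b]) (simp add: \<pi>0_def)
  then obtain \<Delta> where d: "atom \<Delta>" "cons X D (\<Delta> \<union> insert (Neg \<psi>) (R \<Gamma> \<pi>0))" using lindenbaum by blast
  have dc: "\<Delta> \<in> cands \<Gamma> \<pi>0" unfolding cands_def using d cons_mono[OF d(2)] by blast
  have dn: "\<psi> \<notin> \<Delta>" using cons_K_nmem[OF d(1) d(2) _ \<psi>K] by blast
  define l where "l = clist \<Gamma> \<pi>0"
  have "\<Delta> \<in> set l" unfolding l_def clist_set using dc .
  then obtain idx where idx: "idx < length l" "l ! idx = \<Delta>" by (auto simp: in_set_conv_nth)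
  define n where "n = length l"
  have n0: "n > 0" using idx(1) unfolding n_def by linarith
  define s0 where "s0 = (\<Sum>i\<in>UNIV. if i \<in> C then snd (\<alpha> i) else (0::nat))"
  define t where "t = idx + (n - 1) * s0"
  define \<beta> where "\<beta> = (\<lambda>i::'ag. (0::nat, if i = j then t else 0))"
  define \<sigma> where "\<sigma> = (\<lambda>i. if i \<in> C then \<alpha> i else \<beta> i)"
  have f: "(\<lambda>i. fst (\<sigma> i)) = \<pi>0" unfolding \<sigma>_def \<beta>_def \<pi>0_def by auto
  have "(\<Sum>i\<in>UNIV. snd (\<sigma> i)) = (\<Sum>i\<in>UNIV. (if i \<in> C then snd (\<alpha> i) else 0) + (if i = j then t else 0))"
    by (rule sum.cong) (use j in \<open>auto simp: \<sigma>_def \<beta>_def\<close>)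
  also have "\<dots> = s0 + t" by (simp add: sum.distrib s0_def)
  also have "\<dots> = idx + n * s0" unfolding t_def using n0 by (cases n) auto
  finally have "(\<Sum>i\<in>UNIV. snd (\<sigma> i)) mod n = idx" using idx(1) n_def by simp
  then have "out0 \<Gamma> \<sigma> = \<Delta>" unfolding out0_def Let_def f l_def[symmetric] n_def[symmetric] using idx(2) by simp
  then show ?thesis using dn unfolding \<sigma>_def by blast
qed

lemma truth: "atom \<Gamma> \<Longrightarrow> \<psi> \<in> K \<Longrightarrow> sat (\<lambda>_. UNIV) out0 V0 \<Gamma> \<psi> \<longleftrightarrow> \<psi> \<in> \<Gamma>"
proof (induction \<psi> arbitrary: \<Gamma>)
  case Top
  show ?case
  proof (simp, rule ccontr)
    assume "Top \<notin> \<Gamma>"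
    then have "Neg Top \<in> \<Gamma>" using atom_neg[OF Top.prems] by simp
    show False by (rule cons_incons[of X D \<Gamma> "[Neg Top]"]) (use atom_cons[OF Top.prems(1)] \<open>Neg Top \<in> \<Gamma>\<close> in simp_all)
  qed
next
  case (Atom x c)
  then show ?case by (simp add: V0_def)
next
  case (Neg a)
  have aK: "a \<in> K" using subNeg Neg.prems(2) by blast
  show ?case using Neg.IH[OF Neg.prems(1) aK] atom_neg[OF Neg.prems(1) aK] by simp
next
  case (And a b)
  have aK: "a \<in> K" "b \<in> K" using subAnd And.prems(2) by blast+
  have c: "cons X D \<Gamma>" using atom_cons[OF And.prems(1)] .
  have w: "wf X D a" "wf X D b" using wfK aK by blast+
  have "And a b \<in> \<Gamma> \<longleftrightarrow> a \<in> \<Gamma> \<and> b \<in> \<Gamma>"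
  proof
    assume h: "And a b \<in> \<Gamma>"
    show "a \<in> \<Gamma> \<and> b \<in> \<Gamma>"
    proof (rule ccontr)
      assume "\<not> (a \<in> \<Gamma> \<and> b \<in> \<Gamma>)"
      then have "Neg a \<in> \<Gamma> \<or> Neg b \<in> \<Gamma>" using atom_neg[OF And.prems(1)] aK by blast
      then show False
      proof
        assume "Neg a \<in> \<Gamma>"
        show False by (rule cons_incons[of X D \<Gamma> "[And a b, Neg a]"]) (use c h w \<open>Neg a \<in> \<Gamma>\<close> in simp_all)
      next
        assume "Neg b \<in> \<Gamma>"
        show False by (rule cons_incons[of X D \<Gamma> "[And a b, Neg b]"]) (use c h w \<open>Neg b \<in> \<Gamma>\<close> in simp_all)
      qed
    qed
  next
    assume h: "a \<in> \<Gamma> \<and> b \<in> \<Gamma>"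
    show "And a b \<in> \<Gamma>"
    proof (rule ccontr)
      assume "And a b \<notin> \<Gamma>"
      then have "Neg (And a b) \<in> \<Gamma>" using atom_neg[OF And.prems] by blast
      show False by (rule cons_incons[of X D \<Gamma> "[a, b, Neg (And a b)]"]) (use c h w \<open>Neg (And a b) \<in> \<Gamma>\<close> in simp_all)
    qed
  qed
  then show ?case using And.IH(1)[OF And.prems(1) aK(1)] And.IH(2)[OF And.prems(1) aK(2)] by simp
next
  case (Box C a)
  have aK: "a \<in> K" using subBox Box.prems(2) by blast
  have ih: "\<And>\<sigma>. sat (\<lambda>_. UNIV) out0 V0 (out0 \<Gamma> \<sigma>) a \<longleftrightarrow> a \<in> out0 \<Gamma> \<sigma>"
    using Box.IH[OF out0_atom[OF Box.prems(1)] aK] .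
  have "sat (\<lambda>_. UNIV) out0 V0 \<Gamma> (Box C a) \<longleftrightarrow> (\<exists>\<alpha>. \<forall>\<beta>. a \<in> out0 \<Gamma> (\<lambda>i. if i \<in> C then \<alpha> i else \<beta> i))"
    by (simp add: ih)
  also have "\<dots> \<longleftrightarrow> Box C a \<in> \<Gamma>"
  proof
    assume h: "\<exists>\<alpha>. \<forall>\<beta>. a \<in> out0 \<Gamma> (\<lambda>i. if i \<in> C then \<alpha> i else \<beta> i)"
    show "Box C a \<in> \<Gamma>"
    proof (rule ccontr)
      assume "Box C a \<notin> \<Gamma>"
      from h obtain \<alpha> where "\<forall>\<beta>. a \<in> out0 \<Gamma> (\<lambda>i. if i \<in> C then \<alpha> i else \<beta> i)" by blast
      moreover obtain \<beta> where "a \<notin> out0 \<Gamma> (\<lambda>i. if i \<in> C then \<alpha> i else \<beta> i)"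
        using neg[OF Box.prems(1) Box.prems(2) \<open>Box C a \<notin> \<Gamma>\<close>] by blast
      ultimately show False by blast
    qed
  next
    assume "Box C a \<in> \<Gamma>"
    then show "\<exists>\<alpha>. \<forall>\<beta>. a \<in> out0 \<Gamma> (\<lambda>i. if i \<in> C then \<alpha> i else \<beta> i)" using pos[OF Box.prems(1)] by blast
  qed
  finally show ?case .
qed

lemma atoms_coherent: "coherent X D {\<Delta>. atom \<Delta>} V0"
  unfolding coherent_def
proof (intro ballI)
  fix \<Delta> x assume d: "\<Delta> \<in> {\<Delta>. atom \<Delta>}" and x: "x \<in> X"
  then have a: "atom \<Delta>" by simp
  have c: "cons X D \<Delta>" using atom_cons[OF a] .
  have A: "\<exists>c\<in>D x. \<Delta> \<in> V0 x c"
  proof (rule ccontr)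
    assume "\<not> (\<exists>c\<in>D x. \<Delta> \<in> V0 x c)"
    then have n: "\<forall>c\<in>D x. Neg (Atom x c) \<in> \<Delta>" using atom_neg[OF a atK[OF x]] a unfolding V0_def by blast
    have "finite (D x)" using ts x unfolding typed_sig_def by blast
    then obtain cs where cs: "set cs = D x" using finite_list by blast
    have e: "derivable X D (Disj (map (Atom x) cs))" by (rule derivable.Ex[where X=X and D=D and x=x]) (use x cs in auto)
    have "derivable X D (Neg (Conj (map (\<lambda>c. Neg (Atom x c)) cs)))"
      by (rule derive_from[of "[Disj (map (Atom x) cs)]"])
         (use e x cs in \<open>auto simp: peval_Disj peval_Conj wf_Conj\<close>)
    moreover have "set (map (\<lambda>c. Neg (Atom x c)) cs) \<subseteq> \<Delta>" using n cs by auto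
    ultimately show False using c unfolding cons_def by blast
  qed
  have B: "\<forall>c\<in>D x. \<forall>d\<in>D x. c \<noteq> d \<longrightarrow> \<Delta> \<in> V0 x c \<longrightarrow> \<Delta> \<notin> V0 x d"
  proof (intro ballI impI)
    fix c d assume cd: "c \<in> D x" "d \<in> D x" "c \<noteq> d" "\<Delta> \<in> V0 x c"
    show "\<Delta> \<notin> V0 x d"
    proof
      assume "\<Delta> \<in> V0 x d"
      then have m: "Atom x c \<in> \<Delta>" "Atom x d \<in> \<Delta>" using cd(4) unfolding V0_def by auto
      have u: "derivable X D (Imp (Atom x c) (Neg (Atom x d)))" by (rule derivable.Uq[where X=X and D=D and x=x]) (use x cd in auto)
      have "derivable X D (Neg (Conj [Atom x c, Atom x d]))"
        by (rule derive_from[of "[Imp (Atom x c) (Neg (Atom x d))]"])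
           (use u x cd in \<open>auto simp: Imp_def\<close>)
      moreover have "set [Atom x c, Atom x d] \<subseteq> \<Delta>" using m by simp
      ultimately show False using c unfolding cons_def by blast
    qed
  qed
show "(\<exists>c\<in>D x. \<Delta> \<in> V0 x c) \<and> (\<forall>c\<in>D x. \<forall>d\<in>D x. c \<noteq> d \<longrightarrow> \<Delta> \<in> V0 x c \<longrightarrow> \<Delta> \<notin> V0 x d)"
    using A B by blast
qed

end



lemma sat_peval: "peval (\<lambda>f. sat \<Sigma> out V s f) a = sat \<Sigma> out V s a"
  by (induction a) auto

lemma sat_Disj: "sat \<Sigma> out V s (Disj l) \<longleftrightarrow> (\<exists>a\<in>set l. sat \<Sigma> out V s a)"
  by (induction l) (auto simp: Bot_def Or_def)

lemma sat_Imp: "sat \<Sigma> out V s (Imp a b) \<longleftrightarrow> (sat \<Sigma> out V s a \<longrightarrow> sat \<Sigma> out V s b)"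
  by (simp add: Imp_def)

lemma sat_Iff: "sat \<Sigma> out V s (Iff a b) \<longleftrightarrow> (sat \<Sigma> out V s a \<longleftrightarrow> sat \<Sigma> out V s b)"
  by (auto simp: Iff_def Imp_def)

lemma soundness:
  assumes m: "cl_model S \<Sigma> out V" and coh: "coherent X D S V"
  shows "derivable X D a \<Longrightarrow> \<forall>s\<in>S. sat \<Sigma> out V s a"
proof (induction rule: derivable.induct)
  case (Taut a)
  then show ?case using sat_peval unfolding taut_def by metis
next
  case (C1 a b C)
  then show ?case unfolding sat_Imp by auto
next
  case (C2 C)
  have ne: "\<And>i. \<Sigma> i \<noteq> {}" using m unfolding cl_model_def by blast
  define \<beta> where "\<beta> = (\<lambda>i. SOME x. x \<in> \<Sigma> i)"
  have b: "\<And>i. \<beta> i \<in> \<Sigma> i" unfolding \<beta>_def using ne by (simp add: some_in_eq)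
  show ?case
  proof
    fix s assume "s \<in> S"
    show "sat \<Sigma> out V s (Neg (Box C Bot))" unfolding Bot_def sat.simps using b by blast
  qed
next
  case (C3 C)
  have ne: "\<And>i. \<Sigma> i \<noteq> {}" using m unfolding cl_model_def by blast
  define \<alpha> where "\<alpha> = (\<lambda>i. SOME x. x \<in> \<Sigma> i)"
  have b: "\<And>i. \<alpha> i \<in> \<Sigma> i" unfolding \<alpha>_def using ne by (simp add: some_in_eq)
  show ?case using b by auto
next
  case (C4 a b C C')
  show ?case
  proof (intro ballI, unfold sat_Imp, intro impI)
    fix s assume s: "s \<in> S" and h: "sat \<Sigma> out V s (And (Box C a) (Box C' b))"
    then obtain \<alpha>1 \<alpha>2 where a1: "\<forall>i\<in>C. \<alpha>1 i \<in> \<Sigma> i"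
      "\<forall>\<beta>. (\<forall>i\<in>-C. \<beta> i \<in> \<Sigma> i) \<longrightarrow> sat \<Sigma> out V (out s (\<lambda>i. if i \<in> C then \<alpha>1 i else \<beta> i)) a"
      and a2: "\<forall>i\<in>C'. \<alpha>2 i \<in> \<Sigma> i"
      "\<forall>\<beta>. (\<forall>i\<in>-C'. \<beta> i \<in> \<Sigma> i) \<longrightarrow> sat \<Sigma> out V (out s (\<lambda>i. if i \<in> C' then \<alpha>2 i else \<beta> i)) b"
      by auto
    define \<alpha> where "\<alpha> = (\<lambda>i. if i \<in> C then \<alpha>1 i else \<alpha>2 i)"
    show "sat \<Sigma> out V s (Box (C \<union> C') (And a b))"
      unfolding sat.simps(5)
    proof (intro exI[of _ \<alpha>] conjI allI impI)
      show "\<forall>i\<in>C \<union> C'. \<alpha> i \<in> \<Sigma> i" using a1(1) a2(1) unfolding \<alpha>_def by auto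
      fix \<beta> assume bb: "\<forall>i\<in>- (C \<union> C'). \<beta> i \<in> \<Sigma> i"
      let ?p = "\<lambda>i. if i \<in> C \<union> C' then \<alpha> i else \<beta> i"
      define \<beta>1 where "\<beta>1 = (\<lambda>i. if i \<in> C' then \<alpha>2 i else \<beta> i)"
      define \<beta>2 where "\<beta>2 = (\<lambda>i. if i \<in> C then \<alpha>1 i else \<beta> i)"
      have e1: "?p = (\<lambda>i. if i \<in> C then \<alpha>1 i else \<beta>1 i)" unfolding \<alpha>_def \<beta>1_def by auto
      have e2: "?p = (\<lambda>i. if i \<in> C' then \<alpha>2 i else \<beta>2 i)" unfolding \<alpha>_def \<beta>2_def by (rule ext) (use C4.hyps(3) in \<open>auto simp: disjoint_iff\<close>)
      have "\<forall>i\<in>-C. \<beta>1 i \<in> \<Sigma> i" using a2(1) bb unfolding \<beta>1_def by auto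
      then have sa: "sat \<Sigma> out V (out s ?p) a" using a1(2) e1 by simp
      have "\<forall>i\<in>-C'. \<beta>2 i \<in> \<Sigma> i" using a1(1) bb unfolding \<beta>2_def by auto
      then have sb: "sat \<Sigma> out V (out s ?p) b" using a2(2) e2 by simp
      show "sat \<Sigma> out V (out s ?p) (And a b)" using sa sb by simp
    qed
  qed
next
  case (C5 a)
  show ?case
  proof (intro ballI, unfold sat_Imp, intro impI)
    fix s assume s: "s \<in> S" and h: "sat \<Sigma> out V s (Neg (Box {} (Neg a)))"
    then obtain \<beta> where b: "\<forall>i. \<beta> i \<in> \<Sigma> i" "sat \<Sigma> out V (out s \<beta>) a" by auto
    show "sat \<Sigma> out V s (Box UNIV a)"
      unfolding sat.simps by (rule exI[of _ \<beta>]) (use b in simp)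
  qed
next
  case (Ex x cs)
  show ?case
  proof
    fix s assume s: "s \<in> S"
    obtain c where c: "c \<in> D x" "s \<in> V x c" using coh s Ex.hyps(1) unfolding coherent_def by blast
    have "Atom x c \<in> set (map (Atom x) cs)" using c(1) Ex.hyps(2) by simp
    moreover have "sat \<Sigma> out V s (Atom x c)" using c(2) by simp
    ultimately show "sat \<Sigma> out V s (Disj (map (Atom x) cs))" unfolding sat_Disj by blast
  qed
next
  case (Uq x c d)
  show ?case
  proof
    fix s assume s: "s \<in> S"
    have "\<forall>c\<in>D x. \<forall>d\<in>D x. c \<noteq> d \<longrightarrow> s \<in> V x c \<longrightarrow> s \<notin> V x d"
      using coh s Uq.hyps(1) unfolding coherent_def by blast
    then have "s \<in> V x c \<longrightarrow> s \<notin> V x d" using Uq.hyps(2-4) by blast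
    then show "sat \<Sigma> out V s (Imp (Atom x c) (Neg (Atom x d)))" unfolding sat_Imp by simp
  qed
next
  case (MP a b)
  then show ?case unfolding sat_Imp by blast
next
  case (RE a b C)
  show ?case
  proof
    fix s assume s: "s \<in> S"
    have eq: "\<And>\<alpha> \<beta>. \<forall>i\<in>C. \<alpha> i \<in> \<Sigma> i \<Longrightarrow> \<forall>i\<in>-C. \<beta> i \<in> \<Sigma> i \<Longrightarrow>
      sat \<Sigma> out V (out s (\<lambda>i. if i \<in> C then \<alpha> i else \<beta> i)) a \<longleftrightarrow> sat \<Sigma> out V (out s (\<lambda>i. if i \<in> C then \<alpha> i else \<beta> i)) b"
    proof -
      fix \<alpha> \<beta> assume "\<forall>i\<in>C. \<alpha> i \<in> \<Sigma> i" "\<forall>i\<in>-C. \<beta> i \<in> \<Sigma> i"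
      then have "profile \<Sigma> (\<lambda>i. if i \<in> C then \<alpha> i else \<beta> i)" unfolding profile_def by auto
      then have "out s (\<lambda>i. if i \<in> C then \<alpha> i else \<beta> i) \<in> S" using m s unfolding cl_model_def by blast
      then have "sat \<Sigma> out V (out s (\<lambda>i. if i \<in> C then \<alpha> i else \<beta> i)) (Iff a b)"
        by (rule bspec[OF RE.IH])
      then show "sat \<Sigma> out V (out s (\<lambda>i. if i \<in> C then \<alpha> i else \<beta> i)) a \<longleftrightarrow> sat \<Sigma> out V (out s (\<lambda>i. if i \<in> C then \<alpha> i else \<beta> i)) b"
        unfolding sat_Iff .
    qed
    show "sat \<Sigma> out V s (Iff (Box C a) (Box C b))"
      unfolding sat_Iff sat.simps(5)
    proof
      assume "\<exists>\<alpha>. (\<forall>i\<in>C. \<alpha> i \<in> \<Sigma> i) \<and> (\<forall>\<beta>. (\<forall>i\<in>-C. \<beta> i \<in> \<Sigma> i) \<longrightarrow> sat \<Sigma> out V (out s (\<lambda>i. if i \<in> C then \<alpha> i else \<beta> i)) a)"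
      then obtain \<alpha> where h: "\<forall>i\<in>C. \<alpha> i \<in> \<Sigma> i" "\<forall>\<beta>. (\<forall>i\<in>-C. \<beta> i \<in> \<Sigma> i) \<longrightarrow> sat \<Sigma> out V (out s (\<lambda>i. if i \<in> C then \<alpha> i else \<beta> i)) a"
        by blast
      show "\<exists>\<alpha>. (\<forall>i\<in>C. \<alpha> i \<in> \<Sigma> i) \<and> (\<forall>\<beta>. (\<forall>i\<in>-C. \<beta> i \<in> \<Sigma> i) \<longrightarrow> sat \<Sigma> out V (out s (\<lambda>i. if i \<in> C then \<alpha> i else \<beta> i)) b)"
      proof (intro exI[of _ \<alpha>] conjI allI impI)
        show "\<forall>i\<in>C. \<alpha> i \<in> \<Sigma> i" using h(1) .
        fix \<beta> assume bb: "\<forall>i\<in>-C. \<beta> i \<in> \<Sigma> i"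
        show "sat \<Sigma> out V (out s (\<lambda>i. if i \<in> C then \<alpha> i else \<beta> i)) b"
          using mp[OF spec[OF h(2), of \<beta>] bb] eq[OF h(1) bb] by simp
      qed
    next
      assume "\<exists>\<alpha>. (\<forall>i\<in>C. \<alpha> i \<in> \<Sigma> i) \<and> (\<forall>\<beta>. (\<forall>i\<in>-C. \<beta> i \<in> \<Sigma> i) \<longrightarrow> sat \<Sigma> out V (out s (\<lambda>i. if i \<in> C then \<alpha> i else \<beta> i)) b)"
      then obtain \<alpha> where h: "\<forall>i\<in>C. \<alpha> i \<in> \<Sigma> i" "\<forall>\<beta>. (\<forall>i\<in>-C. \<beta> i \<in> \<Sigma> i) \<longrightarrow> sat \<Sigma> out V (out s (\<lambda>i. if i \<in> C then \<alpha> i else \<beta> i)) b"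
        by blast
      show "\<exists>\<alpha>. (\<forall>i\<in>C. \<alpha> i \<in> \<Sigma> i) \<and> (\<forall>\<beta>. (\<forall>i\<in>-C. \<beta> i \<in> \<Sigma> i) \<longrightarrow> sat \<Sigma> out V (out s (\<lambda>i. if i \<in> C then \<alpha> i else \<beta> i)) a)"
      proof (intro exI[of _ \<alpha>] conjI allI impI)
        show "\<forall>i\<in>C. \<alpha> i \<in> \<Sigma> i" using h(1) .
        fix \<beta> assume bb: "\<forall>i\<in>-C. \<beta> i \<in> \<Sigma> i"
        show "sat \<Sigma> out V (out s (\<lambda>i. if i \<in> C then \<alpha> i else \<beta> i)) a"
          using mp[OF spec[OF h(2), of \<beta>] bb] eq[OF h(1) bb] by simp
      qed
    qed
  qed
qed

lemma transport:
  fixes f :: "'s1 \<Rightarrow> 's2" and g :: "'a1 \<Rightarrow> 'a2" and out :: "'s1 \<Rightarrow> ('ag \<Rightarrow> 'a1) \<Rightarrow> 's1"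
  assumes f: "inj_on f S" and g: "inj g" and o: "\<forall>s\<in>S. \<forall>\<sigma>. out s \<sigma> \<in> S"
  shows "s \<in> S \<Longrightarrow> sat (\<lambda>_. range g) (\<lambda>s' \<sigma>'. f (out (inv_into S f s') (\<lambda>i. inv g (\<sigma>' i))))
           (\<lambda>x c. f ` (V x c \<inter> S)) (f s) \<psi> \<longleftrightarrow> sat (\<lambda>_. UNIV) out V s \<psi>"
proof (induction \<psi> arbitrary: s)
  case Top
  then show ?case by simp
next
  case (Atom x c)
  then show ?case using inj_on_image_mem_iff[OF f, of s "V x c \<inter> S"] by auto
next
  case (Neg a)
  then show ?case by simp
next
  case (And a b)
  then show ?case by simp
next
  case (Box C a)
  let ?out' = "\<lambda>s' \<sigma>'. f (out (inv_into S f s') (\<lambda>i. inv g (\<sigma>' i)))"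
  let ?sat' = "sat (\<lambda>_. range g) ?out' (\<lambda>x c. f ` (V x c \<inter> S))"
  let ?sat = "sat (\<lambda>_. UNIV) out V"
  have ivs: "inv_into S f (f s) = s" using inv_into_f_f[OF f Box.prems] .
  have ih: "\<And>\<tau>. ?sat' (?out' (f s) \<tau>) a \<longleftrightarrow> ?sat (out s (\<lambda>i. inv g (\<tau> i))) a"
    unfolding ivs using Box.IH o Box.prems by blast
  show ?case
  proof
    assume "?sat' (f s) (Box C a)"
    then obtain \<alpha>' where a1: "\<forall>i\<in>C. \<alpha>' i \<in> range g"
      and a2: "\<forall>\<beta>'. (\<forall>i\<in>-C. \<beta>' i \<in> range g) \<longrightarrow> ?sat' (?out' (f s) (\<lambda>i. if i \<in> C then \<alpha>' i else \<beta>' i)) a"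
      by auto
    show "?sat s (Box C a)"
      unfolding sat.simps
    proof (intro exI[of _ "\<lambda>i. inv g (\<alpha>' i)"] conjI allI impI)
      show "\<forall>i\<in>C. inv g (\<alpha>' i) \<in> UNIV" by simp
      fix \<beta> :: "'ag \<Rightarrow> 'a1"
      have "?sat' (?out' (f s) (\<lambda>i. if i \<in> C then \<alpha>' i else g (\<beta> i))) a" using a2 by auto
      then have "?sat (out s (\<lambda>i. inv g (if i \<in> C then \<alpha>' i else g (\<beta> i)))) a"
        using ih[of "\<lambda>i. if i \<in> C then \<alpha>' i else g (\<beta> i)"] by blast
      moreover have "(\<lambda>i. inv g (if i \<in> C then \<alpha>' i else g (\<beta> i))) = (\<lambda>i. if i \<in> C then inv g (\<alpha>' i) else \<beta> i)"
        using inv_f_f[OF g] by auto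
      ultimately show "?sat (out s (\<lambda>i. if i \<in> C then inv g (\<alpha>' i) else \<beta> i)) a" by simp
    qed
  next
    assume "?sat s (Box C a)"
    then obtain \<alpha> where a2: "\<forall>\<beta>. ?sat (out s (\<lambda>i. if i \<in> C then \<alpha> i else \<beta> i)) a"
      by auto
    show "?sat' (f s) (Box C a)"
      unfolding sat.simps
    proof (intro exI[of _ "\<lambda>i. g (\<alpha> i)"] conjI allI impI)
      show "\<forall>i\<in>C. g (\<alpha> i) \<in> range g" by simp
      fix \<beta>' :: "'ag \<Rightarrow> 'a2"
      have "(\<lambda>i. inv g (if i \<in> C then g (\<alpha> i) else \<beta>' i)) = (\<lambda>i. if i \<in> C then \<alpha> i else inv g (\<beta>' i))"
        using inv_f_f[OF g] by auto
      moreover have "?sat (out s (\<lambda>i. if i \<in> C then \<alpha> i else inv g (\<beta>' i))) a"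
        using spec[OF a2, of "\<lambda>i. inv g (\<beta>' i)"] by simp
      ultimately have "?sat (out s (\<lambda>i. inv g (if i \<in> C then g (\<alpha> i) else \<beta>' i))) a" by simp
      then show "?sat' (?out' (f s) (\<lambda>i. if i \<in> C then g (\<alpha> i) else \<beta>' i)) a"
        using ih[of "\<lambda>i. if i \<in> C then g (\<alpha> i) else \<beta>' i"] by blast
    qed
  qed
qed

fun subs :: "('ag,'x,'c) fm \<Rightarrow> ('ag,'x,'c) fm set" where
  "subs Top = {Top}"
| "subs (Atom x c) = {Atom x c}"
| "subs (Neg a) = insert (Neg a) (subs a)"
| "subs (And a b) = insert (And a b) (subs a \<union> subs b)"
| "subs (Box C a) = insert (Box C a) (subs a)"

lemma finite_subs: "finite (subs a)"
  by (induction a) auto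

lemma self_subs: "a \<in> subs a"
  by (cases a) auto

lemma subs_Neg: "Neg a \<in> subs \<chi> \<Longrightarrow> a \<in> subs \<chi>"
  by (induction \<chi>) (auto simp: self_subs)

lemma subs_And: "And a b \<in> subs \<chi> \<Longrightarrow> a \<in> subs \<chi> \<and> b \<in> subs \<chi>"
  by (induction \<chi>) (auto simp: self_subs)

lemma subs_Box: "Box C a \<in> subs \<chi> \<Longrightarrow> a \<in> subs \<chi>"
  by (induction \<chi>) (auto simp: self_subs)

lemma wf_subs: "wf X D \<chi> \<Longrightarrow> b \<in> subs \<chi> \<Longrightarrow> wf X D b"
  by (induction \<chi>) auto



theorem mainTheorem8:
  fixes X :: "'x set" and D :: "'x \<Rightarrow> 'c set" and \<chi> :: "('ag::finite, 'x, 'c) fm"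
  assumes "typed_sig X D" and "wf X D \<chi>"
  shows "coh_valid X D TYPE('s::infinite) TYPE('a::infinite) \<chi> \<longleftrightarrow> derivable X D \<chi>"
proof
  assume "derivable X D \<chi>"
  then show "coh_valid X D TYPE('s) TYPE('a) \<chi>"
    unfolding coh_valid_def using soundness by blast
next
  assume v: "coh_valid X D TYPE('s) TYPE('a) \<chi>"
  show "derivable X D \<chi>"
  proof (rule ccontr)
    assume nd: "\<not> derivable X D \<chi>"
    define K :: "('ag,'x,'c) fm set" where "K = subs \<chi> \<union> (\<lambda>(x,c). Atom x c) ` (SIGMA x:X. D x)"
    have ts: "typed_sig X D" by fact
    interpret clset X D K
    proof (unfold_locales)
      show "typed_sig X D" by fact
      have "finite (SIGMA x:X. D x)" using ts unfolding typed_sig_def by (intro finite_SigmaI) auto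
      then show "finite K" unfolding K_def using finite_subs by blast
      show "\<And>a. a \<in> K \<Longrightarrow> wf X D a" unfolding K_def using wf_subs[OF assms(2)] by auto
      show "\<And>a. Neg a \<in> K \<Longrightarrow> a \<in> K" unfolding K_def using subs_Neg by auto
      show "\<And>a b. And a b \<in> K \<Longrightarrow> a \<in> K \<and> b \<in> K" unfolding K_def using subs_And by auto
      show "\<And>C a. Box C a \<in> K \<Longrightarrow> a \<in> K" unfolding K_def using subs_Box by auto
      show "\<And>x c. x \<in> X \<Longrightarrow> c \<in> D x \<Longrightarrow> Atom x c \<in> K" unfolding K_def
        by (intro UnI2 rev_image_eqI[of "(x,c)" for x c]) auto
    qed
    have c: "cons X D {Neg \<chi>}"
      unfolding cons_def
    proof
      assume "\<exists>as. set as \<subseteq> {Neg \<chi>} \<and> derivable X D (Neg (Conj as))"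
      then obtain as where as: "set as \<subseteq> {Neg \<chi>}" "derivable X D (Neg (Conj as))" by blast
      have "derivable X D \<chi>"
      proof (rule derive_from[of "[Neg (Conj as)]"])
        show "\<forall>d\<in>set [Neg (Conj as)]. derivable X D d" using as(2) by simp
        show "wf X D \<chi>" by fact
        show "\<forall>v. (\<forall>d\<in>set [Neg (Conj as)]. peval v d) \<longrightarrow> peval v \<chi>"
        proof (intro allI impI)
          fix v assume h: "\<forall>d\<in>set [Neg (Conj as)]. peval v d"
          show "peval v \<chi>"
          proof (rule ccontr)
            assume "\<not> peval v \<chi>"
            then have "\<forall>a\<in>set as. peval v a" using as(1) by auto
            then show False using h by (simp add: peval_Conj)
          qed
        qed
      qed
      then show False using nd by blast
    qed
    obtain \<Delta> where d: "atom \<Delta>" "cons X D (\<Delta> \<union> {Neg \<chi>})" using lindenbaum[OF c] by blast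
    have \<chi>K: "\<chi> \<in> K" unfolding K_def using self_subs by blast
    have "\<chi> \<notin> \<Delta>" using cons_K_nmem[OF d(1) d(2) _ \<chi>K] by simp
    then have ns: "\<not> sat (\<lambda>_. UNIV) out0 V0 \<Delta> \<chi>" using truth[OF d(1) \<chi>K] by simp
    obtain h1 :: "nat \<Rightarrow> 'a" where h1: "inj h1"
      using infinite_countable_subset[of "UNIV :: 'a set"] infinite_UNIV by blast
    define g where "g = h1 \<circ> prod_encode"
    have g: "inj g" unfolding g_def using h1 inj_prod_encode inj_compose by blast
    let ?A = "{\<Delta>. atom \<Delta>}"
    obtain e :: "('ag,'x,'c) fm set \<Rightarrow> nat" where e: "inj_on e ?A"
      using finite_imp_inj_to_nat_seg[OF finite_atoms] by blast
    obtain h2 :: "nat \<Rightarrow> 's" where h2: "inj h2"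
      using infinite_countable_subset[of "UNIV :: 's set"] infinite_UNIV by blast
    define f where "f = h2 \<circ> e"
    have f: "inj_on f ?A" unfolding f_def using comp_inj_on[OF e inj_on_subset[OF h2 subset_UNIV]] .
    have o: "\<forall>s\<in>?A. \<forall>\<sigma>. out0 s \<sigma> \<in> ?A" using out0_atom by blast
    define S' where "S' = f ` ?A"
    define out' where "out' = (\<lambda>s' \<sigma>'. f (out0 (inv_into ?A f s') (\<lambda>i. inv g (\<sigma>' i))))"
    define V' where "V' = (\<lambda>x c. f ` (V0 x c \<inter> ?A))"
    have tr: "\<And>s \<psi>. s \<in> ?A \<Longrightarrow> sat (\<lambda>_. range g) out' V' (f s) \<psi> \<longleftrightarrow> sat (\<lambda>_. UNIV) out0 V0 s \<psi>"
      unfolding out'_def V'_def using transport[OF f g o] by blast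
    have m: "cl_model S' (\<lambda>_. range g) out' V'"
      unfolding cl_model_def
    proof (intro conjI allI ballI impI)
      show "S' \<noteq> {}" unfolding S'_def using d(1) by blast
      fix i show "range g \<noteq> {}" by blast
    next
      fix s \<sigma> assume s: "s \<in> S'"
      then have "inv_into ?A f s \<in> ?A" unfolding S'_def by (rule inv_into_into)
      then have "out0 (inv_into ?A f s) (\<lambda>i. inv g (\<sigma> i)) \<in> ?A" using o by blast
      then show "out' s \<sigma> \<in> S'" unfolding out'_def S'_def by blast
    next
      fix x c show "V' x c \<subseteq> S'" unfolding V'_def S'_def by blast
    qed
    have coh: "coherent X D S' V'"
      unfolding coherent_def
    proof (intro ballI)
      fix s x assume s: "s \<in> S'" and x: "x \<in> X"
      then obtain t where t: "t \<in> ?A" "s = f t" unfolding S'_def by blast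
      have iff: "\<And>c. s \<in> V' x c \<longleftrightarrow> t \<in> V0 x c"
        unfolding V'_def t(2) using inj_on_image_mem_iff[OF f t(1), of "V0 x _ \<inter> ?A"] t(1) by blast
      have "(\<exists>c\<in>D x. t \<in> V0 x c) \<and> (\<forall>c\<in>D x. \<forall>d\<in>D x. c \<noteq> d \<longrightarrow> t \<in> V0 x c \<longrightarrow> t \<notin> V0 x d)"
        using atoms_coherent t(1) x unfolding coherent_def by blast
      then show "(\<exists>c\<in>D x. s \<in> V' x c) \<and> (\<forall>c\<in>D x. \<forall>d\<in>D x. c \<noteq> d \<longrightarrow> s \<in> V' x c \<longrightarrow> s \<notin> V' x d)"
        unfolding iff .
    qed
    have "\<forall>s\<in>S'. sat (\<lambda>_. range g) out' V' s \<chi>" using v m coh unfolding coh_valid_def by blast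
    then have "sat (\<lambda>_. range g) out' V' (f \<Delta>) \<chi>" unfolding S'_def using d(1) by blast
    then show False using tr[of \<Delta> \<chi>] ns d(1) by simp
  qed
qed


end
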